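(* Let $\Omega\subset\mathbb{R}^N$ be open, $w\in\mathrm{USC}(\Omega)$ and $x_0\in\Omega$. Then $w$ is $\tilde{\mathcal{Q}}$-subharmonic at $x_0$ if and only if $w(x_0)\le 0$ or $w$ is subaffine at $x_0$.
   Context: $\mathcal{S}(N)$: real symmetric $N\times N$ matrices; $\lambda_N(A)$ the largest eigenvalue. $\tilde{\mathcal{Q}}:=\{(r,A)\in\mathbb{R}\times\mathcal{S}(N): r\le 0\text{ or }\lambda_N(A)\ge 0\}$. $J^+_{x_0}w:=\{(\varphi(x_0),D^2\varphi(x_0)):\varphi$ is $C^2$ near $x_0$, $w\le\varphi$ near $x_0$, $w(x_0)=\varphi(x_0)\}$. $w$ is $\tilde{\mathcal Q}$-subharmonic at $x_0$ if $J^+_{x_0}w\subset\tilde{\mathcal{Q}}$. $w$ is subaffine at $x_0$ if there is no triple $(\varepsilon,\rho,a)$ with $\varepsilon,\rho>0$ and $a$ an affine function on $\mathbb{R}^N$ such that $(w-a)(x_0)=0$ and $(w-a)(x)\le-\varepsilon|x-x_0|^2$ for all $x\in B_\rho(x_0)$. *)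

theory Defs
  imports "HOL-Analysis.Analysis"
begin

text \<open>Upper semicontinuity on a set, for extended-real-valued functions
  (values in [-\<infinity>, +\<infinity>), the +\<infinity> exclusion is stated separately).\<close>
definition usc_on :: "'a::topological_space set \<Rightarrow> ('a \<Rightarrow> ereal) \<Rightarrow> bool" where
  "usc_on S w \<longleftrightarrow> (\<forall>x\<in>S. \<forall>c. w x < c \<longrightarrow> eventually (\<lambda>y. w y < c) (at x within S))"

definition symmetric_matrix :: "real^'n^'n \<Rightarrow> bool" where
  "symmetric_matrix A \<longleftrightarrow> transpose A = A"

definition largest_eigenvalue :: "real^'n^'n \<Rightarrow> real" where
  "largest_eigenvalue A = Max {c. \<exists>v. v \<noteq> 0 \<and> A *v v = c *\<^sub>R v}"

definition Qtilde :: "(real \<times> (real^'n^'n)) set" where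
  "Qtilde = {(r, A). symmetric_matrix A \<and> (r \<le> 0 \<or> largest_eigenvalue A \<ge> 0)}"

definition C2_on_ball_with ::
  "(real^'n \<Rightarrow> real) \<Rightarrow> (real^'n \<Rightarrow> real^'n) \<Rightarrow> (real^'n \<Rightarrow> real^'n^'n) \<Rightarrow> real^'n \<Rightarrow> real \<Rightarrow> bool" where
  "C2_on_ball_with phi Dphi D2phi x0 r \<longleftrightarrow>
     (\<forall>x\<in>ball x0 r. (phi has_derivative (\<lambda>h. Dphi x \<bullet> h)) (at x)
                   \<and> (Dphi has_derivative (\<lambda>h. D2phi x *v h)) (at x))
     \<and> continuous_on (ball x0 r) D2phi"

definition upper_jet :: "(real^'n) set \<Rightarrow> (real^'n \<Rightarrow> ereal) \<Rightarrow> real^'n \<Rightarrow> (real \<times> (real^'n^'n)) set" where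
  "upper_jet \<Omega> w x0 = {(phi x0, D2phi x0) | phi Dphi D2phi. \<exists>r>0. ball x0 r \<subseteq> \<Omega>
       \<and> C2_on_ball_with phi Dphi D2phi x0 r
       \<and> (\<forall>y\<in>ball x0 r. w y \<le> ereal (phi y)) \<and> w x0 = ereal (phi x0)}"

definition Qtilde_subharmonic_at :: "(real^'n) set \<Rightarrow> (real^'n \<Rightarrow> ereal) \<Rightarrow> real^'n \<Rightarrow> bool" where
  "Qtilde_subharmonic_at \<Omega> w x0 \<longleftrightarrow> upper_jet \<Omega> w x0 \<subseteq> Qtilde"

definition subaffine_at :: "(real^'n) set \<Rightarrow> (real^'n \<Rightarrow> ereal) \<Rightarrow> real^'n \<Rightarrow> bool" where
  "subaffine_at \<Omega> w x0 \<longleftrightarrow> \<not> (\<exists>\<epsilon>>0. \<exists>\<rho>>0. \<exists>b c.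
       w x0 = ereal (b \<bullet> x0 + c) \<and>
       (\<forall>x\<in>ball x0 \<rho> \<inter> \<Omega>. w x \<le> ereal (b \<bullet> x + c - \<epsilon> * (norm (x - x0))\<^sup>2)))"

end

theory Submission
  imports Defs
begin


lemma ball_add_iff: "x0 + w \<in> ball x0 r \<longleftrightarrow> norm (w::'a::real_normed_vector) < r"
  by (simp add: dist_norm)

lemma path_deriv:
  fixes phi :: "real^'n \<Rightarrow> real"
  assumes "(phi has_derivative (\<lambda>k. D \<bullet> k)) (at (x0 + t *\<^sub>R h))"
  shows "((\<lambda>s. phi (x0 + s *\<^sub>R h)) has_real_derivative (D \<bullet> h)) (at t)"
proof -
  have l: "((\<lambda>s. x0 + s *\<^sub>R h) has_derivative (\<lambda>s. s *\<^sub>R h)) (at t)"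
    by (auto intro!: derivative_eq_intros)
  have "((\<lambda>s. phi (x0 + s *\<^sub>R h)) has_derivative (\<lambda>s. D \<bullet> (s *\<^sub>R h))) (at t)"
    using has_derivative_compose[OF l assms] by simp
  moreover have "(\<lambda>s. D \<bullet> (s *\<^sub>R h)) = (\<lambda>s. (D \<bullet> h) * s)" by (auto simp: mult.commute)
  ultimately show ?thesis by (simp add: has_field_derivative_def)
qed

lemma deriv_est:
  fixes Dphi :: "real^'n \<Rightarrow> real^'n" and A :: "real^'n^'n"
  assumes "(Dphi has_derivative (\<lambda>h. A *v h)) (at x0)" and "\<eta> > 0"
  shows "\<exists>d>0. \<forall>y. norm (y - x0) < d \<longrightarrow> norm (Dphi y - Dphi x0 - A *v (y - x0)) \<le> \<eta> * norm (y - x0)"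
  using assms has_derivative_within_alt[of Dphi "\<lambda>h. A *v h" x0 UNIV] by auto

lemma taylor2:
  fixes phi :: "real^'n \<Rightarrow> real" and Dphi :: "real^'n \<Rightarrow> real^'n" and A :: "real^'n^'n"
  assumes r: "r > 0" and d1: "\<forall>x\<in>ball x0 r. (phi has_derivative (\<lambda>h. Dphi x \<bullet> h)) (at x)"
    and d2: "(Dphi has_derivative (\<lambda>h. A *v h)) (at x0)" and eta: "\<eta> > 0"
  shows "\<exists>\<delta>>0. \<forall>h. norm h < \<delta> \<longrightarrow>
     \<bar>phi (x0 + h) - phi x0 - Dphi x0 \<bullet> h - (h \<bullet> (A *v h)) / 2\<bar> \<le> \<eta> * (norm h)\<^sup>2"
proof -
  obtain d where d: "d > 0" and dd: "\<And>y. norm (y - x0) < d \<Longrightarrow> norm (Dphi y - Dphi x0 - A *v (y - x0)) \<le> \<eta> * norm (y - x0)"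
    using deriv_est[OF d2 eta] by blast
  show ?thesis
  proof (intro exI[of _ "min d r"] conjI allI impI)
    show "min d r > 0" using d r by simp
    fix h :: "real^'n" assume h: "norm h < min d r"
    define R where "R t = phi (x0 + t *\<^sub>R h) - phi x0 - t * (Dphi x0 \<bullet> h) - t\<^sup>2 / 2 * (h \<bullet> (A *v h))" for t
    define R' where "R' t = Dphi (x0 + t *\<^sub>R h) \<bullet> h - Dphi x0 \<bullet> h - t * (h \<bullet> (A *v h))" for t
    have "DERIV R t :> R' t" if t: "0 \<le> t \<and> t \<le> 1" for t
    proof -
      have "norm (t *\<^sub>R h) \<le> norm h" using t by (simp add: mult_left_le_one_le)
      then have "x0 + t *\<^sub>R h \<in> ball x0 r" using h by (simp add: dist_norm)
      then have p: "((\<lambda>s. phi (x0 + s *\<^sub>R h)) has_real_derivative (Dphi (x0 + t *\<^sub>R h) \<bullet> h)) (at t)"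
        using d1 path_deriv by blast
      show ?thesis unfolding R_def R'_def
        by (rule derivative_eq_intros p refl | simp)+
    qed
    then obtain z where z: "0 < z" "z < 1" and eq: "R 1 - R 0 = (1 - 0) * R' z"
      using MVT2[of 0 1 R R'] by auto
    have R1: "R 1 - R 0 = phi (x0 + h) - phi x0 - Dphi x0 \<bullet> h - (h \<bullet> (A *v h)) / 2"
      by (simp add: R_def)
    have "R' z = (Dphi (x0 + z *\<^sub>R h) - Dphi x0 - A *v (z *\<^sub>R h)) \<bullet> h"
      by (simp add: R'_def inner_diff_left inner_diff_right matrix_vector_mult_scaleR inner_commute)
    also have "\<bar>\<dots>\<bar> \<le> norm (Dphi (x0 + z *\<^sub>R h) - Dphi x0 - A *v (z *\<^sub>R h)) * norm h"
      by (rule Cauchy_Schwarz_ineq2)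
    also have "\<dots> \<le> (\<eta> * norm (z *\<^sub>R h)) * norm h"
    proof (rule mult_right_mono)
      have "norm (z *\<^sub>R h) \<le> norm h" using z by (simp add: mult_left_le_one_le)
      then show "norm (Dphi (x0 + z *\<^sub>R h) - Dphi x0 - A *v (z *\<^sub>R h)) \<le> \<eta> * norm (z *\<^sub>R h)"
        using dd[of "x0 + z *\<^sub>R h"] h by simp
    qed simp
    also have "\<dots> \<le> \<eta> * (norm h)\<^sup>2"
      using z eta by (simp add: power2_eq_square mult_left_le_one_le mult.assoc mult_left_mono)
    finally show "\<bar>phi (x0 + h) - phi x0 - Dphi x0 \<bullet> h - (h \<bullet> (A *v h)) / 2\<bar> \<le> \<eta> * (norm h)\<^sup>2"
      using eq R1 by simp
  qed
qed

lemma sym_est: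
  fixes phi :: "real^'n \<Rightarrow> real" and Dphi :: "real^'n \<Rightarrow> real^'n" and A :: "real^'n^'n"
  assumes r: "r > 0" and d1: "\<forall>x\<in>ball x0 r. (phi has_derivative (\<lambda>h. Dphi x \<bullet> h)) (at x)"
    and d2: "(Dphi has_derivative (\<lambda>h. A *v h)) (at x0)" and eta: "\<eta> > 0"
    and u: "norm u \<le> 1" and v: "norm v \<le> 1"
  shows "\<exists>t0>0. \<forall>t. 0 < t \<and> t < t0 \<longrightarrow>
    \<bar>phi (x0 + t *\<^sub>R u + t *\<^sub>R v) - phi (x0 + t *\<^sub>R u) - phi (x0 + t *\<^sub>R v) + phi x0
       - t\<^sup>2 * ((A *v u) \<bullet> v)\<bar> \<le> 3 * \<eta> * t\<^sup>2"
proof -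
  obtain d where d: "d > 0" and dd: "\<And>y. norm (y - x0) < d \<Longrightarrow> norm (Dphi y - Dphi x0 - A *v (y - x0)) \<le> \<eta> * norm (y - x0)"
    using deriv_est[OF d2 eta] by blast
  show ?thesis
  proof (intro exI[of _ "min d r / 3"] conjI allI impI)
    show "min d r / 3 > 0" using d r by simp
    fix t :: real assume t: "0 < t \<and> t < min d r / 3"
    define g where "g s = phi (x0 + t *\<^sub>R u + s *\<^sub>R v) - phi (x0 + s *\<^sub>R v)" for s
    define g' where "g' s = Dphi (x0 + t *\<^sub>R u + s *\<^sub>R v) \<bullet> v - Dphi (x0 + s *\<^sub>R v) \<bullet> v" for s
    have nb: "norm (a *\<^sub>R u + b *\<^sub>R v) \<le> a + b" if "0 \<le> a" "0 \<le> b" for a b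
    proof -
      have "norm (a *\<^sub>R u + b *\<^sub>R v) \<le> norm (a *\<^sub>R u) + norm (b *\<^sub>R v)" by (rule norm_triangle_ineq)
      also have "\<dots> \<le> a + b" using that u v mult_left_le[of "norm u" a] mult_left_le[of "norm v" b] by simp
      finally show ?thesis .
    qed
    have "DERIV g s :> g' s" if s: "0 \<le> s \<and> s \<le> t" for s
    proof -
      have "norm (t *\<^sub>R u + s *\<^sub>R v) \<le> t + s" using nb[of t s] s t by simp
      then have b1: "(x0 + t *\<^sub>R u) + s *\<^sub>R v \<in> ball x0 r" using s t ball_add_iff[of x0 "t *\<^sub>R u + s *\<^sub>R v" r] by (simp add: add.assoc)
      have "norm (0 *\<^sub>R u + s *\<^sub>R v) \<le> 0 + s" using nb[of 0 s] s by simp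
      then have b2: "x0 + s *\<^sub>R v \<in> ball x0 r" using s t by (simp add: dist_norm)
      have p1: "((\<lambda>s. phi ((x0 + t *\<^sub>R u) + s *\<^sub>R v)) has_real_derivative (Dphi (x0 + t *\<^sub>R u + s *\<^sub>R v) \<bullet> v)) (at s)"
        using d1 b1 path_deriv by blast
      have p2: "((\<lambda>s. phi (x0 + s *\<^sub>R v)) has_real_derivative (Dphi (x0 + s *\<^sub>R v) \<bullet> v)) (at s)"
        using d1 b2 path_deriv by blast
      show ?thesis unfolding g_def g'_def by (rule DERIV_diff[OF p1 p2])
    qed
    then obtain z where z: "0 < z" "z < t" and eq: "g t - g 0 = (t - 0) * g' z"
      using MVT2[of 0 t g g'] t by auto
    define E1 where "E1 = Dphi (x0 + t *\<^sub>R u + z *\<^sub>R v) - Dphi x0 - A *v (t *\<^sub>R u + z *\<^sub>R v)"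
    define E2 where "E2 = Dphi (x0 + z *\<^sub>R v) - Dphi x0 - A *v (z *\<^sub>R v)"
    have n1: "norm (t *\<^sub>R u + z *\<^sub>R v) \<le> 2 * t" using nb[of t z] z t by simp
    have n2: "norm (z *\<^sub>R v) \<le> t" using mult_left_le[OF v less_imp_le[OF z(1)]] z by (simp only: norm_scaleR abs_of_pos[OF z(1)])
    have e1: "norm E1 \<le> \<eta> * (2 * t)"
    proof -
      have "norm E1 \<le> \<eta> * norm (t *\<^sub>R u + z *\<^sub>R v)"
        unfolding E1_def using dd[of "x0 + t *\<^sub>R u + z *\<^sub>R v"] n1 t by (simp add: add.assoc)
      also have "\<dots> \<le> \<eta> * (2 * t)" using n1 eta by (simp add: mult_left_mono)
      finally show ?thesis .
    qed
    have e2: "norm E2 \<le> \<eta> * t"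
    proof -
      have "norm E2 \<le> \<eta> * norm (z *\<^sub>R v)"
        unfolding E2_def using dd[of "x0 + z *\<^sub>R v"] n2 t by simp
      also have "\<dots> \<le> \<eta> * t" using n2 eta by (simp add: mult_left_mono)
      finally show ?thesis .
    qed
    have gz: "g' z - t * ((A *v u) \<bullet> v) = (E1 - E2) \<bullet> v"
      unfolding g'_def E1_def E2_def
      by (simp add: matrix_vector_right_distrib matrix_vector_mult_scaleR inner_diff_left inner_add_left algebra_simps)
    have "\<bar>(E1 - E2) \<bullet> v\<bar> \<le> norm (E1 - E2) * norm v" by (rule Cauchy_Schwarz_ineq2)
    also have "\<dots> \<le> norm (E1 - E2)" using v by (simp add: mult_left_le)
    also have "\<dots> \<le> norm E1 + norm E2" by (rule norm_triangle_ineq4)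
    also have "\<dots> \<le> 3 * \<eta> * t" using e1 e2 by simp
    finally have "\<bar>g' z - t * ((A *v u) \<bullet> v)\<bar> \<le> 3 * \<eta> * t" using gz by simp
    then have tt: "t * \<bar>g' z - t * ((A *v u) \<bullet> v)\<bar> \<le> t * (3 * \<eta> * t)" using t by (simp add: mult_left_mono)
    have "g t - g 0 = phi (x0 + t *\<^sub>R u + t *\<^sub>R v) - phi (x0 + t *\<^sub>R u) - phi (x0 + t *\<^sub>R v) + phi x0"
      by (simp add: g_def)
    then have key: "phi (x0 + t *\<^sub>R u + t *\<^sub>R v) - phi (x0 + t *\<^sub>R u) - phi (x0 + t *\<^sub>R v) + phi x0
       - t\<^sup>2 * ((A *v u) \<bullet> v) = t * (g' z - t * ((A *v u) \<bullet> v))"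
      using eq by (simp add: power2_eq_square algebra_simps)
    show "\<bar>phi (x0 + t *\<^sub>R u + t *\<^sub>R v) - phi (x0 + t *\<^sub>R u) - phi (x0 + t *\<^sub>R v) + phi x0
       - t\<^sup>2 * ((A *v u) \<bullet> v)\<bar> \<le> 3 * \<eta> * t\<^sup>2"
      unfolding key using tt t by (simp add: abs_mult power2_eq_square mult_ac)
  qed
qed

lemma hess_sym:
  fixes phi :: "real^'n \<Rightarrow> real" and Dphi :: "real^'n \<Rightarrow> real^'n" and A :: "real^'n^'n"
  assumes r: "r > 0" and d1: "\<forall>x\<in>ball x0 r. (phi has_derivative (\<lambda>h. Dphi x \<bullet> h)) (at x)"
    and d2: "(Dphi has_derivative (\<lambda>h. A *v h)) (at x0)"
  shows "transpose A = A"
proof -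
  have ent: "(A *v axis j 1) \<bullet> axis i 1 = A$i$j" for i j
    by (simp add: matrix_vector_mult_basis inner_axis column_def)
  have "A$i$j = A$j$i" for i j
  proof (rule ccontr)
    assume ne: "A$i$j \<noteq> A$j$i"
    define u where "u = (axis j 1 :: real^'n)"
    define v where "v = (axis i 1 :: real^'n)"
    define a where "a = (A *v u) \<bullet> v"
    define b where "b = (A *v v) \<bullet> u"
    have ab: "a \<noteq> b" using ne ent by (simp add: a_def b_def u_def v_def)
    define \<eta> where "\<eta> = \<bar>a - b\<bar> / 12"
    have eta: "\<eta> > 0" using ab by (simp add: \<eta>_def)
    have nu: "norm u \<le> 1" and nv: "norm v \<le> 1" by (simp_all add: u_def v_def)
    obtain t1 where t1: "t1 > 0" and h1: "\<And>t. 0 < t \<and> t < t1 \<Longrightarrow>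
    \<bar>phi (x0 + t *\<^sub>R u + t *\<^sub>R v) - phi (x0 + t *\<^sub>R u) - phi (x0 + t *\<^sub>R v) + phi x0
       - t\<^sup>2 * a\<bar> \<le> 3 * \<eta> * t\<^sup>2"
      using sym_est[OF r d1 d2 eta nu nv] unfolding a_def by blast
    obtain t2 where t2: "t2 > 0" and h2: "\<And>t. 0 < t \<and> t < t2 \<Longrightarrow>
    \<bar>phi (x0 + t *\<^sub>R v + t *\<^sub>R u) - phi (x0 + t *\<^sub>R v) - phi (x0 + t *\<^sub>R u) + phi x0
       - t\<^sup>2 * b\<bar> \<le> 3 * \<eta> * t\<^sup>2"
      using sym_est[OF r d1 d2 eta nv nu] unfolding b_def by blast
    define t where "t = min t1 t2 / 2"
    have t: "0 < t" "t < t1" "t < t2" using t1 t2 by (auto simp: t_def)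
    have sw: "x0 + t *\<^sub>R v + t *\<^sub>R u = x0 + t *\<^sub>R u + t *\<^sub>R v" by (simp add: add_ac)
    define D where "D = phi (x0 + t *\<^sub>R u + t *\<^sub>R v) - phi (x0 + t *\<^sub>R u) - phi (x0 + t *\<^sub>R v) + phi x0"
    have e1: "\<bar>D - t\<^sup>2 * a\<bar> \<le> 3 * \<eta> * t\<^sup>2" using h1[of t] t unfolding D_def by simp
    have e2: "\<bar>D - t\<^sup>2 * b\<bar> \<le> 3 * \<eta> * t\<^sup>2" using h2[of t] t sw unfolding D_def by simp
    have "t\<^sup>2 * \<bar>a - b\<bar> = \<bar>(D - t\<^sup>2 * b) - (D - t\<^sup>2 * a)\<bar>"
    proof -
      have "(D - t\<^sup>2 * b) - (D - t\<^sup>2 * a) = t\<^sup>2 * (a - b)" by (simp add: algebra_simps)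
      then show ?thesis by (simp add: abs_mult)
    qed
    also have "\<dots> \<le> 6 * \<eta> * t\<^sup>2" using e1 e2 by linarith
    also have "\<dots> = t\<^sup>2 * \<bar>a - b\<bar> / 2" by (simp add: \<eta>_def)
    finally have "t\<^sup>2 * \<bar>a - b\<bar> \<le> 0" by (simp add: mult.commute)
    moreover have "t\<^sup>2 * \<bar>a - b\<bar> > 0" using t ab by simp
    ultimately show False by simp
  qed
  then show ?thesis by (simp add: vec_eq_iff transpose_def)
qed

lemma quad_zero:
  fixes a c :: real
  assumes h: "\<forall>t::real. 0 \<le> 2*t*a + t\<^sup>2*c" and a: "a \<ge> 0" shows "a = 0"
proof (rule ccontr)
  assume "a \<noteq> 0" then have ap: "a > 0" using a by simp
  define k where "k = \<bar>c\<bar> + 1"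
  have k: "k > 0" by (simp add: k_def)
  define t where "t = - a / k"
  have "t\<^sup>2 * c \<le> t\<^sup>2 * k" by (rule mult_left_mono) (auto simp: k_def)
  also have "\<dots> = a\<^sup>2 / k" using k by (simp add: t_def power2_eq_square field_simps)
  finally have "2*t*a + t\<^sup>2*c \<le> -2 * a\<^sup>2 / k + a\<^sup>2 / k"
    by (simp add: t_def power2_eq_square field_simps)
  also have "\<dots> < 0" using ap k by (simp add: field_simps)
  finally show False using h[rule_format, of t] by linarith
qed
lemma sym_inner: fixes A :: "real^'n^'n" assumes "transpose A = A"
  shows "x \<bullet> (A *v y) = (A *v x) \<bullet> y"
proof -
  have s: "A$i$j = A$j$i" for i j using assms by (metis transpose_def vec_lambda_beta)
  have "x \<bullet> (A *v y) = (\<Sum>i\<in>UNIV. \<Sum>j\<in>UNIV. x$i * A$i$j * y$j)"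
    by (simp add: inner_vec_def matrix_vector_mult_def sum_distrib_left mult.assoc)
  also have "\<dots> = (\<Sum>i\<in>UNIV. \<Sum>j\<in>UNIV. x$i * A$j$i * y$j)" using s by simp
  also have "\<dots> = (\<Sum>j\<in>UNIV. \<Sum>i\<in>UNIV. x$i * A$j$i * y$j)" by (rule sum.swap)
  also have "\<dots> = (A *v x) \<bullet> y"
    by (simp add: inner_vec_def matrix_vector_mult_def sum_distrib_right sum_distrib_left mult_ac)
  finally show ?thesis .
qed

lemma eig_finite:
  fixes M :: "real^'n^'n" assumes sym: "transpose M = M"
  shows "finite {c. \<exists>v. v \<noteq> 0 \<and> M *v v = c *\<^sub>R v}"
proof -
  define E where "E = {c. \<exists>v. v \<noteq> 0 \<and> M *v v = c *\<^sub>R v}"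
  define ev where "ev c = (SOME v. v \<noteq> 0 \<and> M *v v = c *\<^sub>R v)" for c
  have evp: "ev c \<noteq> 0 \<and> M *v ev c = c *\<^sub>R ev c" if "c \<in> E" for c
    using that unfolding E_def ev_def mem_Collect_eq by (rule someI_ex)
  have inj: "inj_on ev E"
  proof (rule inj_onI)
    fix c1 c2 assume c: "c1 \<in> E" "c2 \<in> E" "ev c1 = ev c2"
    then have "c1 *\<^sub>R ev c1 = c2 *\<^sub>R ev c1" using evp by metis
    then show "c1 = c2" using evp[OF c(1)] by (simp add: scaleR_cancel_right)
  qed
  have po: "pairwise orthogonal (ev ` E)"
  proof (clarsimp simp: pairwise_def)
    fix c1 c2 assume c: "c1 \<in> E" "c2 \<in> E" "ev c1 \<noteq> ev c2"
    then have ne: "c1 \<noteq> c2" by auto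
    have "c1 * (ev c1 \<bullet> ev c2) = (M *v ev c1) \<bullet> ev c2" using evp[OF c(1)] by simp
    also have "\<dots> = ev c1 \<bullet> (M *v ev c2)" using sym_inner[OF sym] by simp
    also have "\<dots> = c2 * (ev c1 \<bullet> ev c2)" using evp[OF c(2)] by simp
    finally have "(c1 - c2) * (ev c1 \<bullet> ev c2) = 0" by (simp add: algebra_simps)
    then show "orthogonal (ev c1) (ev c2)" using ne by (simp add: orthogonal_def)
  qed
  have "0 \<notin> ev ` E" using evp by auto
  then have "independent (ev ` E)" using pairwise_orthogonal_independent po by blast
  then have "finite (ev ` E)" by (rule eucl.finiteI_independent)
  then have "finite E" using inj finite_imageD by blast
  then show ?thesis by (simp add: E_def)
qed

lemma rayleigh:
  fixes M :: "real^'n^'n" assumes sym: "transpose M = M"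
  shows "\<exists>\<mu> v. v \<noteq> 0 \<and> M *v v = \<mu> *\<^sub>R v \<and> (\<forall>h. h \<bullet> (M *v h) \<le> \<mu> * (norm h)\<^sup>2)"
proof -
  define S where "S = sphere (0::real^'n) 1"
  have "axis undefined 1 \<in> S" by (simp add: S_def norm_axis_1)
  then have Sne: "S \<noteq> {}" by blast
  have cont: "continuous_on S (\<lambda>h. h \<bullet> (M *v h))"
    by (intro continuous_intros matrix_vector_mult_linear_continuous_on)
  obtain v where vS: "v \<in> S" and vmax: "\<And>y. y \<in> S \<Longrightarrow> y \<bullet> (M *v y) \<le> v \<bullet> (M *v v)"
    using continuous_attains_sup[OF _ Sne cont] compact_sphere S_def by blast
  define \<mu> where "\<mu> = v \<bullet> (M *v v)"
  have nv: "norm v = 1" using vS by (simp add: S_def)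
  have bound: "h \<bullet> (M *v h) \<le> \<mu> * (norm h)\<^sup>2" for h
  proof (cases "h = 0")
    case True then show ?thesis by simp
  next
    case False
    define k where "k = (1 / norm h) *\<^sub>R h"
    have "k \<in> S" using False by (simp add: S_def k_def)
    then have "k \<bullet> (M *v k) \<le> \<mu>" using vmax \<mu>_def by simp
    moreover have "k \<bullet> (M *v k) = (h \<bullet> (M *v h)) / (norm h)\<^sup>2"
      by (simp add: k_def matrix_vector_mult_scaleR power2_eq_square)
    ultimately show ?thesis using False by (simp add: field_simps)
  qed
  define y where "y = \<mu> *\<^sub>R v - M *v v"
  define c where "c = \<mu> * (norm y)\<^sup>2 - y \<bullet> (M *v y)"
  have "0 \<le> 2 * t * (y \<bullet> y) + t\<^sup>2 * c" for t
  proof -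
    have "0 \<le> \<mu> * (norm (v + t *\<^sub>R y))\<^sup>2 - (v + t *\<^sub>R y) \<bullet> (M *v (v + t *\<^sub>R y))"
      using bound[of "v + t *\<^sub>R y"] by simp
    also have "\<dots> = 2 * t * (y \<bullet> y) + t\<^sup>2 * c"
    proof -
      have s1: "v \<bullet> (M *v y) = y \<bullet> (M *v v)" using sym_inner[OF sym, of v y] by (simp add: inner_commute)
      have s2: "v \<bullet> (M *v (M *v v)) = (M *v v) \<bullet> (M *v v)" using sym_inner[OF sym] by simp
      have nn: "v \<bullet> v = 1" using nv by (simp add: dot_square_norm)
      show ?thesis
        unfolding c_def power2_norm_eq_inner
        by (simp add: matrix_vector_right_distrib matrix_vector_mult_scaleR inner_add_left inner_add_right
            s1 s2 nn y_def inner_diff_left inner_diff_right \<mu>_def power2_eq_square algebra_simps inner_commute)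
    qed
    finally show ?thesis .
  qed
  then have "y \<bullet> y = 0" using quad_zero[of "y \<bullet> y" c] by simp
  then have "M *v v = \<mu> *\<^sub>R v" by (simp add: y_def)
  moreover have "v \<noteq> 0" using nv by auto
  ultimately show ?thesis using bound by blast
qed

lemma mat_mul_vec: "mat c *v (x::real^'n) = c *\<^sub>R x"
proof -
  have "(\<Sum>j\<in>UNIV. (if i = j then c else 0) * (x $ j)) = c * x$i" for i
    by (subst sum.cong[OF refl, of _ _ "\<lambda>j. if j = i then c * x$j else 0"]) auto
  then show ?thesis by (simp add: vec_eq_iff matrix_vector_mult_def mat_def)
qed

theorem lemma2p9:
  fixes \<Omega> :: "(real^'n) set" and w :: "real^'n \<Rightarrow> ereal" and x0 :: "real^'n"
  assumes "open \<Omega>"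
    and "usc_on \<Omega> w" and "\<forall>x\<in>\<Omega>. w x \<noteq> \<infinity>"
    and "x0 \<in> \<Omega>"
  shows "Qtilde_subharmonic_at \<Omega> w x0 \<longleftrightarrow> (w x0 \<le> 0 \<or> subaffine_at \<Omega> w x0)"
  unfolding Qtilde_subharmonic_at_def
proof
  assume J: "upper_jet \<Omega> w x0 \<subseteq> Qtilde"
  show "w x0 \<le> 0 \<or> subaffine_at \<Omega> w x0"
  proof (rule ccontr)
    assume "\<not> (w x0 \<le> 0 \<or> subaffine_at \<Omega> w x0)"
    then have pos: "\<not> w x0 \<le> 0" and ns: "\<not> subaffine_at \<Omega> w x0" by auto
    from ns obtain \<epsilon> \<rho> b c where ep: "\<epsilon> > 0" and rho: "\<rho> > 0" and wx0: "w x0 = ereal (b \<bullet> x0 + c)"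
      and le: "\<forall>x\<in>ball x0 \<rho> \<inter> \<Omega>. w x \<le> ereal (b \<bullet> x + c - \<epsilon> * (norm (x - x0))\<^sup>2)"
      unfolding subaffine_at_def by blast
    obtain r0 where r0: "r0 > 0" and br0: "ball x0 r0 \<subseteq> \<Omega>"
      using assms(1,4) open_contains_ball by blast
    define r where "r = min r0 \<rho>"
    have r: "r > 0" using r0 rho by (simp add: r_def)
    define phi where "phi x = b \<bullet> x + c - \<epsilon> * ((x - x0) \<bullet> (x - x0))" for x
    define Dphi where "Dphi x = b - (2 * \<epsilon>) *\<^sub>R (x - x0)" for x
    define D2 where "D2 x = (mat (- 2 * \<epsilon>) :: real^'n^'n)" for x :: "real^'n"
    have dphi: "(phi has_derivative (\<lambda>h. Dphi x \<bullet> h)) (at x)" for x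
    proof -
      have "(phi has_derivative (\<lambda>h. b \<bullet> h - \<epsilon> * ((x - x0) \<bullet> h + h \<bullet> (x - x0)))) (at x)"
        unfolding phi_def by (rule derivative_eq_intros refl | simp)+
      moreover have "(\<lambda>h. b \<bullet> h - \<epsilon> * ((x - x0) \<bullet> h + h \<bullet> (x - x0))) = (\<lambda>h. Dphi x \<bullet> h)"
        by (auto simp: Dphi_def inner_diff_left inner_commute algebra_simps)
      ultimately show ?thesis by simp
    qed
    have d2phi: "(Dphi has_derivative (\<lambda>h. D2 x *v h)) (at x)" for x
    proof -
      have "(Dphi has_derivative (\<lambda>h. - ((2 * \<epsilon>) *\<^sub>R h))) (at x)"
        unfolding Dphi_def by (rule derivative_eq_intros refl | simp)+
      moreover have "(\<lambda>h. - ((2 * \<epsilon>) *\<^sub>R h)) = (\<lambda>h. D2 x *v h)"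
        by (auto simp: D2_def mat_mul_vec)
      ultimately show ?thesis by simp
    qed
    have C2: "C2_on_ball_with phi Dphi D2 x0 r"
      unfolding C2_on_ball_with_def using dphi d2phi by (simp add: D2_def)
    have wle: "\<forall>y\<in>ball x0 r. w y \<le> ereal (phi y)"
    proof
      fix y assume y: "y \<in> ball x0 r"
      then have "y \<in> ball x0 \<rho> \<inter> \<Omega>" using br0 by (auto simp: r_def)
      then show "w y \<le> ereal (phi y)" using le by (simp add: phi_def power2_norm_eq_inner)
    qed
    have wx0': "w x0 = ereal (phi x0)" using wx0 by (simp add: phi_def)
    have "ball x0 r \<subseteq> \<Omega>" using br0 by (auto simp: r_def)
    then have "(phi x0, D2 x0) \<in> upper_jet \<Omega> w x0"
      unfolding upper_jet_def using r C2 wle wx0' by blast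
    then have "(phi x0, D2 x0) \<in> Qtilde" using J by blast
    then have "phi x0 \<le> 0 \<or> largest_eigenvalue (D2 x0) \<ge> 0" by (simp add: Qtilde_def)
    moreover have "phi x0 > 0" using pos wx0' by simp
    moreover have "largest_eigenvalue (D2 x0) = - 2 * \<epsilon>"
    proof -
      have "{c. \<exists>v. v \<noteq> 0 \<and> D2 x0 *v v = c *\<^sub>R v} = {- 2 * \<epsilon>}"
      proof (intro equalityI subsetI)
        fix c assume "c \<in> {c. \<exists>v. v \<noteq> 0 \<and> D2 x0 *v v = c *\<^sub>R v}"
        then obtain v :: "real^'n" where "v \<noteq> 0" "D2 x0 *v v = c *\<^sub>R v" by blast
        then have "(- 2 * \<epsilon>) *\<^sub>R v = c *\<^sub>R v" by (simp only: D2_def mat_mul_vec)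
        then have "- 2 * \<epsilon> = c" using \<open>v \<noteq> 0\<close> scaleR_cancel_right by blast
        then show "c \<in> {- 2 * \<epsilon>}" by simp
      next
        fix c assume "c \<in> {- 2 * \<epsilon>}"
        then show "c \<in> {c. \<exists>v. v \<noteq> 0 \<and> D2 x0 *v v = c *\<^sub>R v}"
          by (intro CollectI exI[of _ "axis undefined 1"]) (simp add: axis_eq_0_iff D2_def mat_mul_vec)
      qed
      then show ?thesis by (simp add: largest_eigenvalue_def)
    qed
    ultimately show False using ep by simp
  qed
next
  assume H: "w x0 \<le> 0 \<or> subaffine_at \<Omega> w x0"
  show "upper_jet \<Omega> w x0 \<subseteq> Qtilde"
  proof
    fix z assume "z \<in> upper_jet \<Omega> w x0"
    then obtain phi Dphi D2phi r where zeq: "z = (phi x0, D2phi x0)" and r: "r > 0"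
      and br: "ball x0 r \<subseteq> \<Omega>" and C2: "C2_on_ball_with phi Dphi D2phi x0 r"
      and wle: "\<forall>y\<in>ball x0 r. w y \<le> ereal (phi y)" and wx0: "w x0 = ereal (phi x0)"
      unfolding upper_jet_def by blast
    have d1: "\<forall>x\<in>ball x0 r. (phi has_derivative (\<lambda>h. Dphi x \<bullet> h)) (at x)"
      using C2 by (simp add: C2_on_ball_with_def)
    have d2: "(Dphi has_derivative (\<lambda>h. D2phi x0 *v h)) (at x0)"
      using C2 r by (simp add: C2_on_ball_with_def)
    define M where "M = D2phi x0"
    have sym: "transpose M = M" unfolding M_def by (rule hess_sym[OF r d1 d2])
    have "phi x0 \<le> 0 \<or> largest_eigenvalue M \<ge> 0"
    proof (rule ccontr)
      assume "\<not> (phi x0 \<le> 0 \<or> largest_eigenvalue M \<ge> 0)"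
      then have p: "phi x0 > 0" and L: "largest_eigenvalue M < 0" by auto
      define L where "L = largest_eigenvalue M"
      have sa: "subaffine_at \<Omega> w x0" using H p wx0 by auto
      obtain \<mu> v where v: "v \<noteq> 0" "M *v v = \<mu> *\<^sub>R v" and bd: "\<And>h. h \<bullet> (M *v h) \<le> \<mu> * (norm h)\<^sup>2"
        using rayleigh[OF sym] by blast
      have "\<mu> \<le> L" unfolding L_def largest_eigenvalue_def
        using eig_finite[OF sym] v by (intro Max_ge) auto
      then have bdL: "h \<bullet> (M *v h) \<le> L * (norm h)\<^sup>2" for h
        using bd[of h] by (meson order_trans mult_right_mono zero_le_power2)
      define \<epsilon> where "\<epsilon> = - L / 4"
      have ep: "\<epsilon> > 0" using L by (simp add: \<epsilon>_def L_def)
      obtain \<delta> where dl: "\<delta> > 0" and tay: "\<And>h. norm h < \<delta> \<Longrightarrow>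
         \<bar>phi (x0 + h) - phi x0 - Dphi x0 \<bullet> h - (h \<bullet> (M *v h)) / 2\<bar> \<le> \<epsilon> * (norm h)\<^sup>2"
        using taylor2[OF r d1 d2 ep] unfolding M_def by blast
      define b where "b = Dphi x0"
      define c where "c = phi x0 - b \<bullet> x0"
      have "\<forall>x\<in>ball x0 (min \<delta> r) \<inter> \<Omega>. w x \<le> ereal (b \<bullet> x + c - \<epsilon> * (norm (x - x0))\<^sup>2)"
      proof
        fix x assume x: "x \<in> ball x0 (min \<delta> r) \<inter> \<Omega>"
        define h where "h = x - x0"
        have xh: "x = x0 + h" by (simp add: h_def)
        have nh: "norm h < \<delta>" using x by (simp add: h_def dist_norm norm_minus_commute)
        have xb: "x \<in> ball x0 r" using x by simp
        have "phi x \<le> phi x0 + b \<bullet> h + (h \<bullet> (M *v h)) / 2 + \<epsilon> * (norm h)\<^sup>2"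
          using tay[OF nh] xh by (simp add: b_def)
        also have "\<dots> \<le> phi x0 + b \<bullet> h + L * (norm h)\<^sup>2 / 2 + \<epsilon> * (norm h)\<^sup>2"
          using bdL[of h] by simp
        also have "\<dots> = b \<bullet> x + c - \<epsilon> * (norm (x - x0))\<^sup>2"
          by (simp add: c_def h_def \<epsilon>_def inner_diff_right algebra_simps)
        finally have "phi x \<le> b \<bullet> x + c - \<epsilon> * (norm (x - x0))\<^sup>2" .
        then show "w x \<le> ereal (b \<bullet> x + c - \<epsilon> * (norm (x - x0))\<^sup>2)"
          using wle xb order_trans by fastforce
      qed
      moreover have "w x0 = ereal (b \<bullet> x0 + c)" using wx0 by (simp add: c_def)
      moreover have "min \<delta> r > 0" using dl r by simp
      ultimately show False using sa ep unfolding subaffine_at_def by blast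
    qed
    then show "z \<in> Qtilde" using sym zeq by (simp add: Qtilde_def symmetric_matrix_def M_def)
  qed
qed

end
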